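(* For every $\varepsilon>0$ and $v\in\mathbb R$ there exist constants $A,B>0$ and $p_\varepsilon>0$ such that for all $p<p_\varepsilon$ and all $n\ge 1$, \[\mathbb P\big(T^p_{site}((0,0),(n,\lceil vn\rceil))\le n(v+1-\varepsilon)\big)\le A\exp(-Bn).\]
   Context: Site percolation model with parameter $p\in[0,1]$: each site (vertex) of $\mathbb Z^2$ receives an independent weight equal to $0$ with probability $p$ and $1$ with probability $1-p$. A path $(z_0,z_1,\dots)$ is semi-directed if $z_{k+1}-z_k\in\{(1,0),(0,1),(0,-1)\}$ for all $k$. The passage time of a path is the sum of the weights of the sites it visits, and $T^p_{site}(u,w)$ is the infimum of passage times over semi-directed paths from $u$ to $w$. *)

theory Defs
  imports "HOL-Probability.Probability"
begin

type_synonym site = "int \<times> int"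

definition sd_step :: "site \<Rightarrow> site \<Rightarrow> bool" where
  "sd_step z z' \<longleftrightarrow> z' - z \<in> {(1,0), (0,1), (0,-1)}"

definition sd_paths :: "site \<Rightarrow> site \<Rightarrow> site list set" where
  "sd_paths u w = {\<pi>. \<pi> \<noteq> [] \<and> hd \<pi> = u \<and> last \<pi> = w \<and>
       (\<forall>i. Suc i < length \<pi> \<longrightarrow> sd_step (\<pi> ! i) (\<pi> ! Suc i))}"

definition passage_time :: "(site \<Rightarrow> nat) \<Rightarrow> site list \<Rightarrow> nat" where
  "passage_time \<omega> \<pi> = sum_list (map \<omega> \<pi>)"

definition T_site :: "(site \<Rightarrow> nat) \<Rightarrow> site \<Rightarrow> site \<Rightarrow> nat" where
  "T_site \<omega> u w = (INF \<pi> \<in> sd_paths u w. passage_time \<omega> \<pi>)"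

text \<open>Site percolation configuration space: each site is True (weight 1) with probability
  1-p and False (weight 0) with probability p, independently (infinite product measure).\<close>
definition site_perc :: "real \<Rightarrow> (site \<Rightarrow> bool) measure" where
  "site_perc p = PiM UNIV (\<lambda>_. measure_pmf (bernoulli_pmf (1 - p)))"

definition weight_of :: "(site \<Rightarrow> bool) \<Rightarrow> site \<Rightarrow> nat" where
  "weight_of b z = (if b z then 1 else 0)"

end

theory Submission imports Defs begin

lemma space_sp: "space (site_perc p) = UNIV"
  by (simp add: site_perc_def space_PiM)

lemma prob_sp: "prob_space (site_perc p)"
  unfolding site_perc_def by (rule prob_space_PiM) (rule prob_space_measure_pmf)

definition cyl :: "site set \<Rightarrow> (site \<Rightarrow> bool) set" where
  "cyl K = {b. \<forall>z\<in>K. \<not> b z}"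

lemma cyl_emb: "cyl K = prod_emb UNIV (\<lambda>_. measure_pmf (bernoulli_pmf (1 - p))) K (Pi\<^sub>E K (\<lambda>_. {False}))"
  apply (auto simp: cyl_def prod_emb_iff restrict_def PiE_iff fun_eq_iff)
  by (metis (full_types))

lemma cyl_sets: "finite K \<Longrightarrow> cyl K \<in> sets (site_perc p)"
  unfolding site_perc_def cyl_emb[of K p]
  by (intro measurable_prod_emb sets_PiM_I_finite) auto

lemma cyl_measure:
  assumes "finite K" "0 \<le> p" "p \<le> 1"
  shows "measure (site_perc p) (cyl K) = p ^ card K"
proof -
  have "emeasure (site_perc p) (cyl K) = (\<Prod>z\<in>K. emeasure (measure_pmf (bernoulli_pmf (1 - p))) {False})"
    unfolding site_perc_def cyl_emb[of K p]
    by (rule emeasure_PiM_emb) (auto simp: assms prob_space_measure_pmf)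
  also have "\<dots> = (\<Prod>z\<in>K. ennreal p)"
    using assms by (simp add: emeasure_pmf_single)
  also have "\<dots> = ennreal (p ^ card K)" using assms by (simp add: prod_ennreal ennreal_power)
  finally show ?thesis using assms unfolding measure_def by simp
qed


lemma sd_step_iff: "sd_step z z' \<longleftrightarrow> z' = (fst z + 1, snd z) \<or> z' = (fst z, snd z + 1) \<or> z' = (fst z, snd z - 1)"
  by (cases z; cases z') (auto simp: sd_step_def)

lemma sd_paths_succ: "sd_paths u w = {\<pi>. \<pi> \<noteq> [] \<and> hd \<pi> = u \<and> last \<pi> = w \<and> successively sd_step \<pi>}"
  by (simp add: sd_paths_def successively_conv_nth)

lemma snoc_path: "\<pi> \<in> sd_paths u w \<Longrightarrow> sd_step w z \<Longrightarrow> \<pi> @ [z] \<in> sd_paths u z"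
  by (auto simp: sd_paths_succ successively_append_iff)

lemma path_vert: "sd_paths (0,0) (0, int k) \<noteq> {} \<and> sd_paths (0,0) (0, - int k) \<noteq> {}"
proof (induction k)
  case 0
  have "[(0,0)] \<in> sd_paths (0,0) (0,0)" by (simp add: sd_paths_succ)
  then show ?case by auto
next
  case (Suc k)
  then obtain \<pi>1 \<pi>2 where 1: "\<pi>1 \<in> sd_paths (0,0) (0, int k)" and 2: "\<pi>2 \<in> sd_paths (0,0) (0, - int k)" by blast
  have "\<pi>1 @ [(0, int (Suc k))] \<in> sd_paths (0,0) (0, int (Suc k))"
    by (rule snoc_path[OF 1]) (simp add: sd_step_iff)
  moreover have "\<pi>2 @ [(0, - int (Suc k))] \<in> sd_paths (0,0) (0, - int (Suc k))"
    by (rule snoc_path[OF 2]) (simp add: sd_step_iff)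
  ultimately show ?case by blast
qed

lemma path_exists: "sd_paths (0,0) (int a, b) \<noteq> {}"
proof (induction a)
  case 0
  show ?case using path_vert[of "nat \<bar>b\<bar>"] by (cases "b \<ge> 0") auto
next
  case (Suc a)
  then obtain \<pi> where 1: "\<pi> \<in> sd_paths (0,0) (int a, b)" by blast
  have "\<pi> @ [(int (Suc a), b)] \<in> sd_paths (0,0) (int (Suc a), b)"
    by (rule snoc_path[OF 1]) (simp add: sd_step_iff)
  then show ?case by blast
qed

lemma len_bound: "successively sd_step \<pi> \<Longrightarrow> \<pi> \<noteq> [] \<Longrightarrow>
  \<bar>fst (last \<pi>) - fst (hd \<pi>)\<bar> + \<bar>snd (last \<pi>) - snd (hd \<pi>)\<bar> \<le> int (length \<pi>) - 1"
proof (induction sd_step \<pi> rule: successively.induct)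
  case (3 x y xs)
  then have IH: "\<bar>fst (last (y#xs)) - fst y\<bar> + \<bar>snd (last (y#xs)) - snd y\<bar> \<le> int (length (y#xs)) - 1"
    and s: "sd_step x y" by auto
  from s show ?case using IH by (auto simp: sd_step_iff)
qed auto

lemma exists_distinct:
  assumes "\<pi> \<in> sd_paths u w" "real (passage_time \<omega> \<pi>) \<le> c"
  shows "\<exists>\<pi>'. \<pi>' \<in> sd_paths u w \<and> real (passage_time \<omega> \<pi>') \<le> c \<and> distinct \<pi>'"
  using assms
proof (induction "length \<pi>" arbitrary: \<pi> rule: less_induct)
  case less
  show ?case
  proof (cases "distinct \<pi>")
    case True then show ?thesis using less.prems by blast
  next
    case False
    then obtain xs ys zs y where eq: "\<pi> = xs@[y]@ys@[y]@zs" using not_distinct_decomp by blast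
    have p2: "xs@[y]@zs \<in> sd_paths u w" using less.prems(1) unfolding eq
      by (auto simp: sd_paths_succ successively_append_iff successively_Cons hd_append split: if_splits)
    have "passage_time \<omega> (xs@[y]@zs) \<le> passage_time \<omega> \<pi>" unfolding eq passage_time_def by simp
    then have "real (passage_time \<omega> (xs@[y]@zs)) \<le> c" using less.prems(2) by linarith
    moreover have "length (xs@[y]@zs) < length \<pi>" unfolding eq by simp
    ultimately show ?thesis using less.hyps p2 by blast
  qed
qed

definition Q :: "nat \<Rightarrow> site \<Rightarrow> site list set" where
  "Q L z = {\<pi>. length \<pi> = Suc L \<and> hd \<pi> = z \<and> successively sd_step \<pi>}"

lemma Q_card: "finite (Q L z) \<and> card (Q L z) \<le> 3 ^ L"
proof (induction L arbitrary: z)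
  case 0
  have "Q 0 z = {[z]}" by (auto simp: Q_def length_Suc_conv)
  then show ?case by simp
next
  case (Suc L)
  define D :: "site set" where "D = {(1,0),(0,1),(0,-1)}"
  have sub: "Q (Suc L) z \<subseteq> (\<Union>d\<in>D. Cons z ` Q L (z + d))"
  proof
    fix \<pi> assume "\<pi> \<in> Q (Suc L) z"
    then obtain y r where \<pi>: "\<pi> = z # y # r" "length r = L" "sd_step z y" "successively sd_step (y#r)"
      by (auto simp: Q_def length_Suc_conv)
    then have "y - z \<in> D" by (simp add: sd_step_def D_def)
    moreover have "y # r \<in> Q L (z + (y - z))" using \<pi> by (simp add: Q_def)
    ultimately show "\<pi> \<in> (\<Union>d\<in>D. Cons z ` Q L (z + d))" using \<pi>(1) by blast
  qed
  have fin: "finite D" by (simp add: D_def)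
  have f2: "finite (\<Union>d\<in>D. Cons z ` Q L (z + d))" using fin Suc.IH by blast
  have "card (Q (Suc L) z) \<le> card (\<Union>d\<in>D. Cons z ` Q L (z + d))" by (rule card_mono[OF f2 sub])
  also have "\<dots> \<le> (\<Sum>d\<in>D. card (Cons z ` Q L (z + d)))" by (rule card_UN_le[OF fin])
  also have "\<dots> \<le> (\<Sum>d\<in>D. 3 ^ L)" 
    by (intro sum_mono) (meson Suc.IH card_image_le le_trans)
  also have "\<dots> \<le> 3 * 3 ^ L" by (simp add: D_def)
  finally show ?case using f2 sub finite_subset by auto
qed


lemma passage_card:
  assumes "distinct \<pi>"
  shows "passage_time (weight_of b) \<pi> = card {z\<in>set \<pi>. b z}"
proof -
  have "passage_time (weight_of b) \<pi> = (\<Sum>z\<in>set \<pi>. weight_of b z)"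
    unfolding passage_time_def using assms by (simp add: sum_list_distinct_conv_sum_set)
  also have "\<dots> = (\<Sum>z\<in>{z\<in>set \<pi>. b z}. 1)"
    unfolding weight_of_def by (simp add: sum.If_cases Int_def)
  finally show ?thesis by simp
qed

lemma key:
  assumes \<pi>: "\<pi> \<in> sd_paths (0,0) (int n, m)" "distinct \<pi>"
    and t: "real (passage_time (weight_of b) \<pi>) \<le> t"
    and k: "real k \<le> real (Suc (n + nat \<bar>m\<bar>)) - t"
  shows "\<exists>\<pi>'\<in>Q (n + nat \<bar>m\<bar>) (0,0). \<exists>K\<in>{K. K \<subseteq> set \<pi>' \<and> card K = k}. b \<in> cyl K"
proof -
  define L where "L = n + nat \<bar>m\<bar>"
  have P: "\<pi> \<noteq> [] \<and> hd \<pi> = (0,0) \<and> last \<pi> = (int n, m) \<and> successively sd_step \<pi>"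
    using \<pi>(1) unfolding sd_paths_succ by (rule CollectD)
  then have ne: "\<pi> \<noteq> []" and hd: "hd \<pi> = (0,0)" and la: "last \<pi> = (int n, m)" and su: "successively sd_step \<pi>"
    by blast+
  have "\<bar>int n - 0\<bar> + \<bar>m - 0\<bar> \<le> int (length \<pi>) - 1" using len_bound[OF su ne] hd la by simp
  then have len: "Suc L \<le> length \<pi>" unfolding L_def by linarith
  define \<pi>' where "\<pi>' = take (Suc L) \<pi>"
  have split: "\<pi> = \<pi>' @ drop (Suc L) \<pi>" unfolding \<pi>'_def by simp
  have lp: "length \<pi>' = Suc L" using len unfolding \<pi>'_def by simp
  have su': "successively sd_step \<pi>'" proof -
    have "successively sd_step (\<pi>' @ drop (Suc L) \<pi>)" using su by (simp only: split[symmetric])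
    then show ?thesis by (simp add: successively_append_iff)
  qed
  have hd': "hd \<pi>' = (0,0)" using hd ne unfolding \<pi>'_def by (simp add: hd_take)
  have Q: "\<pi>' \<in> Q L (0,0)" using lp su' hd' by (simp add: Q_def)
  have di: "distinct \<pi>'" using \<pi>(2) unfolding \<pi>'_def by simp
  have "passage_time (weight_of b) \<pi>' \<le> passage_time (weight_of b) (\<pi>' @ drop (Suc L) \<pi>)"
    by (simp add: passage_time_def)
  also have "\<dots> = passage_time (weight_of b) \<pi>" using split[symmetric] by (rule arg_cong)
  finally have "passage_time (weight_of b) \<pi>' \<le> passage_time (weight_of b) \<pi>" .
  then have "real (passage_time (weight_of b) \<pi>') \<le> real (passage_time (weight_of b) \<pi>)"
    by (simp only: of_nat_le_iff)
  then have "real (passage_time (weight_of b) \<pi>') \<le> t" using t by (rule order_trans)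
  then have t': "real (card {z\<in>set \<pi>'. b z}) \<le> t" by (simp only: passage_card[OF di, of b])
  have cs: "card (set \<pi>') = Suc L" using distinct_card[OF di] lp by (rule trans)
  have "card (set \<pi>') = card ({z\<in>set \<pi>'. b z} \<union> {z\<in>set \<pi>'. \<not> b z})"
    by (rule arg_cong[where f=card]) auto
  also have "\<dots> = card {z\<in>set \<pi>'. b z} + card {z\<in>set \<pi>'. \<not> b z}"
    by (rule card_Un_disjoint) auto
  finally have eq: "card {z\<in>set \<pi>'. b z} + card {z\<in>set \<pi>'. \<not> b z} = Suc L"
    using cs by simp
  have "real (card {z\<in>set \<pi>'. b z}) + real (card {z\<in>set \<pi>'. \<not> b z}) = real (Suc L)"
    using arg_cong[OF eq, of real] by (simp only: of_nat_add)
  moreover have "real k \<le> real (Suc L) - t" using k unfolding L_def .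
  ultimately have "real k \<le> real (card {z\<in>set \<pi>'. \<not> b z})" using t' by linarith
  then have "k \<le> card {z\<in>set \<pi>'. \<not> b z}" by (simp only: of_nat_le_iff)
  then obtain K where K: "K \<subseteq> {z\<in>set \<pi>'. \<not> b z}" "card K = k" by (rule obtain_subset_with_card_n)
  then have "b \<in> cyl K" by (auto simp: cyl_def)
  moreover have "K \<in> {K. K \<subseteq> set \<pi>' \<and> card K = k}" using K by auto
  ultimately show ?thesis using Q unfolding L_def by blast
qed


lemma pt_meas: "(\<lambda>b. real (passage_time (weight_of b) \<pi>)) \<in> borel_measurable (site_perc p)"
proof (induction \<pi>)
  case Nil then show ?case by (simp add: passage_time_def)
next
  case (Cons z \<pi>)
  have eq: "(\<lambda>b. real (passage_time (weight_of b) (z#\<pi>))) =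
     (\<lambda>b. indicator (space (site_perc p) - cyl {z}) b + real (passage_time (weight_of b) \<pi>))"
    by (auto simp: fun_eq_iff passage_time_def weight_of_def indicator_def cyl_def space_sp)
  have "space (site_perc p) - cyl {z} \<in> sets (site_perc p)" using cyl_sets[of "{z}" p] by auto
  then have "indicator (space (site_perc p) - cyl {z}) \<in> borel_measurable (site_perc p)"
    by (rule borel_measurable_indicator)
  then show ?case unfolding eq using Cons by (rule borel_measurable_add)
qed

lemma T_le:
  "real (T_site \<omega> (0,0) (int n, m)) \<le> t \<longleftrightarrow> (\<exists>\<pi>\<in>sd_paths (0,0) (int n, m). real (passage_time \<omega> \<pi>) \<le> t)"
proof
  let ?S = "sd_paths (0,0) (int n, m)"
  assume a: "real (T_site \<omega> (0,0) (int n, m)) \<le> t"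
  have "?S \<noteq> {}" by (rule path_exists)
  then have "Inf (passage_time \<omega> ` ?S) \<in> passage_time \<omega> ` ?S" by (intro Inf_nat_def1) auto
  then show "\<exists>\<pi>\<in>?S. real (passage_time \<omega> \<pi>) \<le> t" using a unfolding T_site_def by auto
next
  assume "\<exists>\<pi>\<in>sd_paths (0,0) (int n, m). real (passage_time \<omega> \<pi>) \<le> t"
  then obtain \<pi> where \<pi>: "\<pi> \<in> sd_paths (0,0) (int n, m)" "real (passage_time \<omega> \<pi>) \<le> t" by blast
  have "T_site \<omega> (0,0) (int n, m) \<le> passage_time \<omega> \<pi>"
    unfolding T_site_def by (rule cINF_lower[OF _ \<pi>(1)]) (simp add: bdd_below_def)
  then show "real (T_site \<omega> (0,0) (int n, m)) \<le> t" using \<pi>(2) by linarith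
qed

lemma numeric:
  fixes p c \<epsilon> x :: real
  assumes "\<epsilon> > 0" "0 \<le> p" "p < exp (- (1 + c * ln 6) / \<epsilon>)" "c \<ge> 0" "x \<ge> 0"
    and "real N \<le> c * x" "real k \<ge> \<epsilon> * x" "k \<ge> 1"
  shows "6 ^ N * p ^ k \<le> exp (- x)"
proof (cases "p = 0")
  case True
  obtain j where "k = Suc j" using assms(8) by (cases k) auto
  then have "p ^ k = 0" using True by simp
  then show ?thesis by (metis exp_ge_zero mult_zero_right)
next
  case False
  then have p0: "p > 0" using assms by simp
  have c6: "c * ln 6 \<ge> 0" using assms(4) by (intro mult_nonneg_nonneg) auto
  have "- (1 + c * ln 6) / \<epsilon> \<le> 0" using assms(1) c6 by (intro divide_nonpos_pos) linarith+
  then have "exp (- (1 + c * ln 6) / \<epsilon>) \<le> 1" by simp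
  then have p1: "p \<le> 1" using assms by linarith
  have "ln p < - (1 + c * ln 6) / \<epsilon>" using assms p0 by (metis exp_less_cancel_iff exp_ln)
  then have lnp: "\<epsilon> * ln p \<le> - (1 + c * ln 6)" using assms by (simp add: field_simps)
  have "p ^ k = p powr real k" using p0 by (simp add: powr_realpow)
  also have "\<dots> \<le> p powr (\<epsilon> * x)" using p0 p1 assms by (intro powr_mono') auto
  also have "\<dots> = exp (x * (\<epsilon> * ln p))" using p0 by (simp add: powr_def mult_ac)
  also have "\<dots> \<le> exp (x * (- (1 + c * ln 6)))" using lnp assms by (intro exp_mono mult_left_mono) auto
  finally have A: "p ^ k \<le> exp (x * (- (1 + c * ln 6)))" .
  have "(6::real) ^ N = exp (real N * ln 6)" by (simp add: exp_of_nat_mult)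
  also have "\<dots> \<le> exp (c * x * ln 6)" using assms by (intro exp_mono mult_right_mono) auto
  finally have B: "(6::real) ^ N \<le> exp (c * x * ln 6)" .
  have "6 ^ N * p ^ k \<le> exp (c * x * ln 6) * exp (x * (- (1 + c * ln 6)))"
    using A B p0 by (intro mult_mono) auto
  also have "\<dots> = exp (- x)" by (simp add: exp_add[symmetric] algebra_simps)
  finally show ?thesis .
qed


theorem lemma3p10:
  fixes \<epsilon> v :: real
  assumes "\<epsilon> > 0"
  shows "\<exists>A B p\<^sub>\<epsilon> :: real. A > 0 \<and> B > 0 \<and> p\<^sub>\<epsilon> > 0 \<and>
    (\<forall>p n. 0 \<le> p \<and> p \<le> 1 \<and> p < p\<^sub>\<epsilon> \<and> n \<ge> (1::nat) \<longrightarrow>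
      (let E = {b \<in> space (site_perc p).
                 real (T_site (weight_of b) (0,0) (int n, \<lceil>v * real n\<rceil>))
                   \<le> real n * (v + 1 - \<epsilon>)}
       in E \<in> sets (site_perc p) \<and> measure (site_perc p) E \<le> A * exp (- B * real n)))"
proof -
  define c where "c = 3 + \<bar>v\<bar>"
  define pe where "pe = exp (- (1 + c * ln 6) / \<epsilon>)"
  have main: "E \<in> sets (site_perc p) \<and> measure (site_perc p) E \<le> 1 * exp (- 1 * real n)"
    if H: "0 \<le> p" "p \<le> 1" "p < pe" "n \<ge> 1"
      and E_def: "E = {b \<in> space (site_perc p).
                 real (T_site (weight_of b) (0,0) (int n, \<lceil>v * real n\<rceil>))
                   \<le> real n * (v + 1 - \<epsilon>)}" for p n E
  proof -
    define m where "m = \<lceil>v * real n\<rceil>"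
    define t where "t = real n * (v + 1 - \<epsilon>)"
    define L where "L = n + nat \<bar>m\<bar>"
    define k where "k = nat \<lceil>\<epsilon> * real n\<rceil>"
    define S where "S = sd_paths (0,0) (int n, m)"
    have E_eq: "E = (\<Union>\<pi>\<in>S. {b \<in> space (site_perc p). real (passage_time (weight_of b) \<pi>) \<le> t})"
      unfolding E_def S_def m_def t_def using T_le by blast
    have Es: "E \<in> sets (site_perc p)"
      unfolding E_eq
    proof (rule sets.countable_UN'')
      show "countable S" by (rule countable_subset[OF subset_UNIV]) simp
      show "{b \<in> space (site_perc p). real (passage_time (weight_of b) \<pi>) \<le> t} \<in> sets (site_perc p)" for \<pi>
        using pt_meas[of \<pi> p] unfolding borel_measurable_iff_le by blast
    qed
    have "real n \<ge> 1" using H by simp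
    have mk: "real (Suc L) = real n + 1 + \<bar>real_of_int m\<bar>" unfolding L_def by simp
    have "real_of_int m \<ge> v * real n" unfolding m_def by simp
    have ek: "real_of_int \<lceil>\<epsilon> * real n\<rceil> < \<epsilon> * real n + 1"
      using ceiling_correct[of "\<epsilon> * real n"] by linarith
    have ek2: "real_of_int \<lceil>\<epsilon> * real n\<rceil> \<ge> \<epsilon> * real n" by (rule le_of_int_ceiling)
    have "\<epsilon> * real n \<ge> 0" using assms by simp
    then have "real_of_int \<lceil>\<epsilon> * real n\<rceil> \<ge> 0" using ek2 by linarith
    then have "\<lceil>\<epsilon> * real n\<rceil> \<ge> 0" by (simp only: of_int_0_le_iff)
    then have kr: "real k = real_of_int \<lceil>\<epsilon> * real n\<rceil>" unfolding k_def by (rule of_nat_nat)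
    have tt: "t = v * real n + real n - \<epsilon> * real n" unfolding t_def by (simp add: algebra_simps)
    have "real_of_int m \<le> \<bar>real_of_int m\<bar>" by (rule abs_ge_self)
    then have kb: "real k \<le> real (Suc L) - t" unfolding mk kr tt
      using ek \<open>real_of_int m \<ge> v * real n\<close> by linarith
    have sub: "E \<subseteq> (\<Union>\<pi>'\<in>Q L (0,0). \<Union>K\<in>{K. K \<subseteq> set \<pi>' \<and> card K = k}. cyl K)"
    proof
      fix b assume "b \<in> E"
      then obtain \<pi> where "\<pi> \<in> S" "real (passage_time (weight_of b) \<pi>) \<le> t" unfolding E_eq by blast
      then obtain \<pi>2 where "\<pi>2 \<in> S" "real (passage_time (weight_of b) \<pi>2) \<le> t" "distinct \<pi>2"
        unfolding S_def using exists_distinct by blast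
      from key[OF this(1)[unfolded S_def] this(3,2) kb[unfolded L_def]]
      show "b \<in> (\<Union>\<pi>'\<in>Q L (0,0). \<Union>K\<in>{K. K \<subseteq> set \<pi>' \<and> card K = k}. cyl K)"
        unfolding L_def by blast
    qed
    have finK: "finite {K. K \<subseteq> set \<pi>' \<and> card K = k}" for \<pi>' :: "site list"
      by (rule finite_subset[of _ "Pow (set \<pi>')"]) auto
    have finQ: "finite (Q L (0,0))" using Q_card by blast
    have cylS: "cyl K \<in> sets (site_perc p)" if "K \<subseteq> set \<pi>'" for K \<pi>'
      using that by (intro cyl_sets) (auto intro: finite_subset)
    interpret P: prob_space "site_perc p" by (rule prob_sp)
    have UNs: "(\<Union>K\<in>{K. K \<subseteq> set \<pi>' \<and> card K = k}. cyl K) \<in> sets (site_perc p)" for \<pi>'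
    proof (rule sets.finite_UN[OF finK])
      fix K assume "K \<in> {K. K \<subseteq> set \<pi>' \<and> card K = k}"
      then show "cyl K \<in> sets (site_perc p)" using cylS by blast
    qed
    have "measure (site_perc p) E \<le> measure (site_perc p) (\<Union>\<pi>'\<in>Q L (0,0). \<Union>K\<in>{K. K \<subseteq> set \<pi>' \<and> card K = k}. cyl K)"
      by (intro P.finite_measure_mono[OF sub] sets.finite_UN[OF finQ] UNs)
    also have "\<dots> \<le> (\<Sum>\<pi>'\<in>Q L (0,0). measure (site_perc p) (\<Union>K\<in>{K. K \<subseteq> set \<pi>' \<and> card K = k}. cyl K))"
      by (rule measure_UNION_le[OF finQ UNs])
    also have "\<dots> \<le> (\<Sum>\<pi>'\<in>Q L (0,0). (\<Sum>K\<in>{K. K \<subseteq> set \<pi>' \<and> card K = k}. measure (site_perc p) (cyl K)))"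
    proof (rule sum_mono)
      fix \<pi>' :: "site list" show "measure (site_perc p) (\<Union>K\<in>{K. K \<subseteq> set \<pi>' \<and> card K = k}. cyl K) \<le>
         (\<Sum>K\<in>{K. K \<subseteq> set \<pi>' \<and> card K = k}. measure (site_perc p) (cyl K))"
      proof (rule measure_UNION_le[OF finK])
        fix K assume "K \<in> {K. K \<subseteq> set \<pi>' \<and> card K = k}"
        then show "cyl K \<in> sets (site_perc p)" using cylS by blast
      qed
    qed
    also have "\<dots> = (\<Sum>\<pi>'\<in>Q L (0,0). (\<Sum>K\<in>{K. K \<subseteq> set \<pi>' \<and> card K = k}. p ^ k))"
    proof (intro sum.cong refl)
      fix \<pi>' :: "site list" and K :: "site set" assume "K \<in> {K. K \<subseteq> set \<pi>' \<and> card K = k}"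
      then have "K \<subseteq> set \<pi>'" "card K = k" by auto
      then have "finite K" by (meson List.finite_set finite_subset)
      then show "measure (site_perc p) (cyl K) = p ^ k" using cyl_measure[of K p] H \<open>card K = k\<close> by simp
    qed
    also have "\<dots> \<le> (\<Sum>\<pi>'\<in>Q L (0,0). 2 ^ Suc L * p ^ k)"
    proof (rule sum_mono)
      fix \<pi>' assume "\<pi>' \<in> Q L (0,0)"
      then have len: "length \<pi>' = Suc L" by (simp add: Q_def)
      have "card {K. K \<subseteq> set \<pi>' \<and> card K = k} \<le> card (Pow (set \<pi>'))"
        by (rule card_mono) auto
      also have "\<dots> = 2 ^ card (set \<pi>')" by (simp add: card_Pow)
      also have "\<dots> \<le> 2 ^ Suc L" using card_length[of \<pi>'] len by (intro power_increasing) auto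
      finally have "real (card {K. K \<subseteq> set \<pi>' \<and> card K = k}) \<le> real ((2::nat) ^ Suc L)"
        by (simp only: of_nat_le_iff)
      then have "real (card {K. K \<subseteq> set \<pi>' \<and> card K = k}) \<le> 2 ^ Suc L" by simp
      then show "(\<Sum>K\<in>{K. K \<subseteq> set \<pi>' \<and> card K = k}. p ^ k) \<le> 2 ^ Suc L * p ^ k"
        using H by (simp add: mult_right_mono)
    qed
    also have "\<dots> \<le> 3 ^ L * (2 ^ Suc L * p ^ k)"
      using Q_card[of L "(0,0)"] H by (simp add: mult_right_mono)
    also have "\<dots> \<le> 6 ^ Suc L * p ^ k"
    proof -
      have "(3::real) ^ L * 2 ^ Suc L \<le> 3 ^ Suc L * 2 ^ Suc L" by (intro mult_right_mono power_increasing) auto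
      also have "\<dots> = 6 ^ Suc L" by (simp add: power_mult_distrib[symmetric])
      finally show ?thesis using H by (simp add: mult.assoc[symmetric] mult_right_mono)
    qed
    also have "\<dots> \<le> exp (- real n)"
    proof (rule numeric[of \<epsilon> p c])
      show "p < exp (- (1 + c * ln 6) / \<epsilon>)" using H(3) unfolding pe_def .
      have m1: "v * real n \<le> real_of_int m" "real_of_int m < v * real n + 1"
        unfolding m_def using ceiling_correct[of "v * real n"] by linarith+
      have av: "\<bar>v * real n\<bar> = \<bar>v\<bar> * real n" by (simp add: abs_mult)
      have "v * real n \<le> \<bar>v * real n\<bar>" "- \<bar>v * real n\<bar> \<le> v * real n" by linarith+
      then have "\<bar>real_of_int m\<bar> \<le> \<bar>v\<bar> * real n + 1" unfolding abs_le_iff using m1 av by linarith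
      moreover have "c * real n = 3 * real n + \<bar>v\<bar> * real n" by (simp add: c_def algebra_simps)
      ultimately show "real (Suc L) \<le> c * real n" unfolding mk using \<open>real n \<ge> 1\<close> by linarith
      show ekn: "real k \<ge> \<epsilon> * real n" using kr ek2 by linarith
      have "\<epsilon> * real n > 0" using assms \<open>real n \<ge> 1\<close> by simp
      then have "real k > 0" using ekn by linarith
      then show "k \<ge> 1" by simp
      show "c \<ge> 0" unfolding c_def by simp
    qed (use assms H in auto)
    finally show ?thesis using Es by simp
  qed
  show ?thesis
    apply (rule exI[of _ 1], rule exI[of _ 1], rule exI[of _ pe])
    using main by (auto simp: pe_def Let_def)
qed

end
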